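(* Let $K$ be a field and $P$ an arbitrary poset. An idempotent $\alpha\in FI(P)$ is primitive if and only if there exist $x\in P$ and an invertible $\beta\in FI(P)$ with $\alpha=\beta^{-1}\delta_x^P\beta$. In particular, the diagonal primitive idempotents of $FI(P)$ are exactly the elements $\delta_x^P$, $x\in P$.
   Context: $K$ is a field, $P$ an arbitrary poset. $I(P)$ is the set of functions $\alpha$ assigning to each pair $x\le y$ in $P$ a value $\alpha(x,y)\in K$. An element $\alpha\in I(P)$ is a finitary series if for all $x<y$ in $P$ there are only finitely many pairs $(u,v)$ with $x\le u<v\le y$ and $\alpha(u,v)\neq0$; $FI(P)$ is the set of finitary series. $FI(P)$ is an associative $K$-algebra under pointwise addition and convolution $(\alpha\beta)(x,y)=\sum_{x\le z\le y}\alpha(x,z)\beta(z,y)$. An element is diagonal if $\alpha(x,y)=0$ for $x\ne y$. For $x\in P$, $\delta_x^P\in FI(P)$ is defined by $\delta_x^P(u,v)=1$ if $u=v=x$ and $0$ otherwise. A nonzero idempotent $\alpha$ is primitive if whenever $\varepsilon$ is an idempotent with $\alpha\varepsilon=\varepsilon\alpha=\alpha$ … the paper's definition: whenever $\varepsilon$ is an idempotent with $\varepsilon\alpha=\alpha\varepsilon=\varepsilon$, then $\varepsilon=0$ or $\varepsilon=\alpha$. *)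

theory Defs
  imports Main
begin

text \<open>Incidence-space elements over a poset 'a with values in a field 'k are
represented as functions 'a => 'a => 'k which vanish outside {(x,y). x <= y}.\<close>

type_synonym ('a, 'k) inc = "'a \<Rightarrow> 'a \<Rightarrow> 'k"

definition finitary :: "('a::order, 'k::field) inc \<Rightarrow> bool" where
  "finitary \<alpha> \<longleftrightarrow>
     (\<forall>x y. x < y \<longrightarrow> finite {(u, v). x \<le> u \<and> u < v \<and> v \<le> y \<and> \<alpha> u v \<noteq> 0})"

definition FI :: "('a::order, 'k::field) inc set" where
  "FI = {\<alpha>. (\<forall>x y. \<not> x \<le> y \<longrightarrow> \<alpha> x y = 0) \<and> finitary \<alpha>}"

text \<open>Convolution; for finitary series only finitely many summands are nonzero,
so summing over the nonzero summands is the usual convolution sum.\<close>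
definition conv :: "('a::order, 'k::field) inc \<Rightarrow> ('a, 'k) inc \<Rightarrow> ('a, 'k) inc" where
  "conv \<alpha> \<beta> x y = (if x \<le> y then
      (\<Sum>z \<in> {z. x \<le> z \<and> z \<le> y \<and> \<alpha> x z * \<beta> z y \<noteq> 0}. \<alpha> x z * \<beta> z y) else 0)"

definition one_inc :: "('a::order, 'k::field) inc" where
  "one_inc x y = (if x = y then 1 else 0)"

definition zero_inc :: "('a::order, 'k::field) inc" where
  "zero_inc x y = 0"

definition delta :: "'a::order \<Rightarrow> ('a, 'k::field) inc" where
  "delta a u v = (if u = a \<and> v = a then 1 else 0)"

definition diagonal :: "('a::order, 'k::field) inc \<Rightarrow> bool" where
  "diagonal \<alpha> \<longleftrightarrow> (\<forall>x y. x \<noteq> y \<longrightarrow> \<alpha> x y = 0)"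

definition idempotent :: "('a::order, 'k::field) inc \<Rightarrow> bool" where
  "idempotent \<alpha> \<longleftrightarrow> \<alpha> \<in> FI \<and> conv \<alpha> \<alpha> = \<alpha>"

definition invertible_FI :: "('a::order, 'k::field) inc \<Rightarrow> bool" where
  "invertible_FI \<beta> \<longleftrightarrow> \<beta> \<in> FI \<and>
     (\<exists>\<gamma>\<in>FI. conv \<beta> \<gamma> = one_inc \<and> conv \<gamma> \<beta> = one_inc)"

definition inv_FI :: "('a::order, 'k::field) inc \<Rightarrow> ('a, 'k) inc" where
  "inv_FI \<beta> = (THE \<gamma>. \<gamma> \<in> FI \<and> conv \<beta> \<gamma> = one_inc \<and> conv \<gamma> \<beta> = one_inc)"

definition primitive :: "('a::order, 'k::field) inc \<Rightarrow> bool" where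
  "primitive \<alpha> \<longleftrightarrow> idempotent \<alpha> \<and> \<alpha> \<noteq> zero_inc \<and>
     (\<forall>\<epsilon>. idempotent \<epsilon> \<and> conv \<epsilon> \<alpha> = \<epsilon> \<and> conv \<alpha> \<epsilon> = \<epsilon> \<longrightarrow>
        \<epsilon> = zero_inc \<or> \<epsilon> = \<alpha>)"

end

theory Submission
  imports Defs
begin


definition N :: "('a::order, 'k::field) inc \<Rightarrow> 'a \<Rightarrow> 'a \<Rightarrow> ('a \<times> 'a) set" where
  "N \<alpha> x y = {(u, v). x \<le> u \<and> u < v \<and> v \<le> y \<and> \<alpha> u v \<noteq> 0}"

definition pts :: "('a::order, 'k::field) inc \<Rightarrow> 'a \<Rightarrow> 'a \<Rightarrow> 'a set" where
  "pts \<alpha> x y = {x,y} \<union> fst ` N \<alpha> x y \<union> snd ` N \<alpha> x y"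

lemma FI_0: "\<alpha> \<in> FI \<Longrightarrow> \<not> x \<le> y \<Longrightarrow> \<alpha> x y = 0" by (simp add: FI_def)

lemma finite_N: assumes "\<alpha> \<in> FI" shows "finite (N \<alpha> x y)"
proof (cases "x < y")
  case True thus ?thesis using assms by (simp add: FI_def finitary_def N_def)
next
  case False
  hence "N \<alpha> x y = {}" unfolding N_def by (auto dest: le_less_trans less_le_trans)
  thus ?thesis by simp
qed

lemma FI_I: "(\<And>x y. \<not> x \<le> y \<Longrightarrow> \<alpha> x y = 0) \<Longrightarrow> (\<And>x y. finite (N \<alpha> x y)) \<Longrightarrow> \<alpha> \<in> FI"
  by (auto simp: FI_def finitary_def N_def)

lemma finite_pts: "\<alpha> \<in> FI \<Longrightarrow> finite (pts \<alpha> x y)" by (simp add: pts_def finite_N)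

lemma pts_le: "z \<in> pts \<alpha> x y \<Longrightarrow> x \<le> y \<Longrightarrow> x \<le> z \<and> z \<le> y"
  by (auto simp: pts_def N_def dest: less_imp_le intro: order_trans)

lemma pts_left: assumes "\<alpha> \<in> FI" "\<alpha> x z \<noteq> 0" "z \<le> y" shows "z \<in> pts \<alpha> x y"
proof (cases "z = x")
  case True thus ?thesis by (simp add: pts_def)
next
  case False
  have "x \<le> z" using assms FI_0 by blast
  hence "(x,z) \<in> N \<alpha> x y" using False assms by (auto simp: N_def)
  thus ?thesis unfolding pts_def by (metis UnI2 snd_conv image_eqI)
qed

lemma pts_right: assumes "\<alpha> \<in> FI" "\<alpha> z y \<noteq> 0" "x \<le> z" shows "z \<in> pts \<alpha> x y"
proof (cases "z = y")
  case True thus ?thesis by (simp add: pts_def)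
next
  case False
  have "z \<le> y" using assms FI_0 by blast
  hence "(z,y) \<in> N \<alpha> x y" using False assms by (auto simp: N_def)
  thus ?thesis unfolding pts_def by (metis UnI1 UnI2 fst_conv image_eqI)
qed

lemma conv_0: "\<not> x \<le> y \<Longrightarrow> conv \<alpha> \<beta> x y = 0" by (simp add: conv_def)

lemma conv_sum:
  assumes "\<alpha> \<in> FI" "\<beta> \<in> FI" "finite F" "x \<le> y"
    and "\<And>z. x \<le> z \<Longrightarrow> z \<le> y \<Longrightarrow> \<alpha> x z * \<beta> z y \<noteq> 0 \<Longrightarrow> z \<in> F"
  shows "conv \<alpha> \<beta> x y = (\<Sum>z\<in>F. \<alpha> x z * \<beta> z y)"
proof -
  let ?S = "{z. x \<le> z \<and> z \<le> y \<and> \<alpha> x z * \<beta> z y \<noteq> 0}"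
  have sub: "?S \<subseteq> F" using assms(5) by blast
  have "(\<Sum>z\<in>?S. \<alpha> x z * \<beta> z y) = (\<Sum>z\<in>F. \<alpha> x z * \<beta> z y)"
  proof (rule sum.mono_neutral_left[OF assms(3) sub], rule ballI)
    fix z assume "z \<in> F - ?S"
    thus "\<alpha> x z * \<beta> z y = 0" using FI_0[OF assms(1), of x z] FI_0[OF assms(2), of z y] by auto
  qed
  thus ?thesis using assms(4) by (simp add: conv_def)
qed

lemma conv_pts_right: "\<alpha> \<in> FI \<Longrightarrow> \<beta> \<in> FI \<Longrightarrow> x \<le> y \<Longrightarrow>
   conv \<alpha> \<beta> x y = (\<Sum>z\<in>pts \<beta> x y. \<alpha> x z * \<beta> z y)"
  by (rule conv_sum) (auto simp: finite_pts intro: pts_right)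

lemma conv_pts_left: "\<alpha> \<in> FI \<Longrightarrow> \<beta> \<in> FI \<Longrightarrow> x \<le> y \<Longrightarrow>
   conv \<alpha> \<beta> x y = (\<Sum>z\<in>pts \<alpha> x y. \<alpha> x z * \<beta> z y)"
  by (rule conv_sum) (auto simp: finite_pts intro: pts_left)

lemma conv_FI: assumes "\<alpha> \<in> FI" "\<beta> \<in> FI" shows "conv \<alpha> \<beta> \<in> FI"
proof (rule FI_I)
  show "conv \<alpha> \<beta> x y = 0" if "\<not> x \<le> y" for x y using that by (simp add: conv_def)
  fix x y
  have "N (conv \<alpha> \<beta>) x y \<subseteq> N \<beta> x y \<union> N \<alpha> x y \<union> (fst ` N \<alpha> x y \<times> snd ` N \<beta> x y)"
  proof
    fix p assume "p \<in> N (conv \<alpha> \<beta>) x y"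
    then obtain u v where p: "p = (u,v)" and h: "x \<le> u" "u < v" "v \<le> y" "conv \<alpha> \<beta> u v \<noteq> 0"
      by (auto simp: N_def)
    then obtain z where z: "u \<le> z" "z \<le> v" "\<alpha> u z * \<beta> z v \<noteq> 0"
      by (auto simp: conv_def split: if_splits elim: sum.not_neutral_contains_not_neutral)
    show "p \<in> N \<beta> x y \<union> N \<alpha> x y \<union> (fst ` N \<alpha> x y \<times> snd ` N \<beta> x y)"
    proof (cases "z = u")
      case True thus ?thesis using h z p by (auto simp: N_def)
    next
      case F1: False
      show ?thesis
      proof (cases "z = v")
        case True thus ?thesis using h z p by (auto simp: N_def)
      next
        case False
        have uz: "u < z" using z F1 by (auto simp: less_le)
        have zv: "z < v" using z False by (auto simp: less_le)
        have "(u,z) \<in> N \<alpha> x y" using h z uz zv by (auto simp: N_def intro: order_trans less_imp_le)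
        moreover have "(z,v) \<in> N \<beta> x y" using h z uz zv by (auto simp: N_def intro: order_trans less_imp_le)
        ultimately show ?thesis using p by (metis SigmaI UnI2 fst_conv snd_conv image_eqI)
      qed
    qed
  qed
  thus "finite (N (conv \<alpha> \<beta>) x y)"
    by (rule finite_subset) (simp add: finite_N assms)
qed



lemma conv_assoc:
  assumes a: "\<alpha> \<in> FI" and b: "\<beta> \<in> FI" and c: "\<gamma> \<in> FI"
  shows "conv (conv \<alpha> \<beta>) \<gamma> = conv \<alpha> (conv \<beta> \<gamma>)"
proof (rule ext, rule ext)
  fix x y
  show "conv (conv \<alpha> \<beta>) \<gamma> x y = conv \<alpha> (conv \<beta> \<gamma>) x y"
  proof (cases "x \<le> y")
    case False thus ?thesis by (simp add: conv_0)
  next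
    case xy: True
    define F where "F = pts \<alpha> x y \<union> pts \<gamma> x y"
    have fin: "finite F" using a c by (simp add: F_def finite_pts)
    have FF: "z \<in> F \<Longrightarrow> x \<le> z \<and> z \<le> y" for z using xy by (auto simp: F_def dest: pts_le)
    have ab: "conv \<alpha> \<beta> \<in> FI" "conv \<beta> \<gamma> \<in> FI" using a b c by (simp_all add: conv_FI)
    have "conv (conv \<alpha> \<beta>) \<gamma> x y = (\<Sum>z\<in>F. conv \<alpha> \<beta> x z * \<gamma> z y)"
      by (rule conv_sum[OF ab(1) c fin xy]) (auto simp: F_def intro: pts_right[OF c])
    also have "\<dots> = (\<Sum>z\<in>F. (\<Sum>w\<in>F. \<alpha> x w * \<beta> w z) * \<gamma> z y)"
    proof (rule sum.cong[OF refl])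
      fix z assume "z \<in> F"
      hence "x \<le> z" "z \<le> y" using FF by auto
      hence "conv \<alpha> \<beta> x z = (\<Sum>w\<in>F. \<alpha> x w * \<beta> w z)"
        by (intro conv_sum[OF a b fin]) (auto simp: F_def intro: pts_left[OF a] order_trans)
      thus "conv \<alpha> \<beta> x z * \<gamma> z y = (\<Sum>w\<in>F. \<alpha> x w * \<beta> w z) * \<gamma> z y" by simp
    qed
    also have "\<dots> = (\<Sum>w\<in>F. \<alpha> x w * (\<Sum>z\<in>F. \<beta> w z * \<gamma> z y))"
      unfolding sum_distrib_left sum_distrib_right mult.assoc by (rule sum.swap)
    also have "\<dots> = (\<Sum>w\<in>F. \<alpha> x w * conv \<beta> \<gamma> w y)"
    proof (rule sum.cong[OF refl])
      fix w assume "w \<in> F"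
      hence "x \<le> w" "w \<le> y" using FF by auto
      hence "conv \<beta> \<gamma> w y = (\<Sum>z\<in>F. \<beta> w z * \<gamma> z y)"
        by (intro conv_sum[OF b c fin]) (auto simp: F_def intro: pts_right[OF c] order_trans)
      thus "\<alpha> x w * (\<Sum>z\<in>F. \<beta> w z * \<gamma> z y) = \<alpha> x w * conv \<beta> \<gamma> w y" by simp
    qed
    also have "\<dots> = conv \<alpha> (conv \<beta> \<gamma>) x y"
      by (rule conv_sum[OF a ab(2) fin xy, symmetric]) (auto simp: F_def intro: pts_left[OF a])
    finally show ?thesis .
  qed
qed

lemma one_FI: "one_inc \<in> FI"
  by (rule FI_I) (auto simp: one_inc_def N_def)

lemma zero_FI: "zero_inc \<in> FI"
  by (rule FI_I) (auto simp: zero_inc_def N_def)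

lemma conv_one_left: assumes "\<alpha> \<in> FI" shows "conv one_inc \<alpha> = \<alpha>"
proof (intro ext)
  fix x y show "conv one_inc \<alpha> x y = \<alpha> x y"
  proof (cases "x \<le> y")
    case True
    have "conv one_inc \<alpha> x y = (\<Sum>z\<in>{x}. one_inc x z * \<alpha> z y)"
      by (rule conv_sum[OF one_FI assms _ True]) (auto simp: one_inc_def split: if_splits)
    thus ?thesis by (simp add: one_inc_def)
  qed (simp add: conv_0 FI_0[OF assms])
qed

lemma conv_one_right: assumes "\<alpha> \<in> FI" shows "conv \<alpha> one_inc = \<alpha>"
proof (intro ext)
  fix x y show "conv \<alpha> one_inc x y = \<alpha> x y"
  proof (cases "x \<le> y")
    case True
    have "conv \<alpha> one_inc x y = (\<Sum>z\<in>{y}. \<alpha> x z * one_inc z y)"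
      by (rule conv_sum[OF assms one_FI _ True]) (auto simp: one_inc_def split: if_splits)
    thus ?thesis by (simp add: one_inc_def)
  qed (simp add: conv_0 FI_0[OF assms])
qed

lemma plus_FI: assumes "\<alpha> \<in> FI" "\<beta> \<in> FI" shows "(\<lambda>x y. \<alpha> x y + \<beta> x y) \<in> FI"
proof (rule FI_I)
  show "\<alpha> x y + \<beta> x y = 0" if "\<not> x \<le> y" for x y using that assms by (simp add: FI_0)
  fix x y
  have "N (\<lambda>x y. \<alpha> x y + \<beta> x y) x y \<subseteq> N \<alpha> x y \<union> N \<beta> x y" by (auto simp: N_def)
  thus "finite (N (\<lambda>x y. \<alpha> x y + \<beta> x y) x y)"
    by (rule finite_subset) (simp add: finite_N assms)
qed

lemma minus_FI: assumes "\<alpha> \<in> FI" "\<beta> \<in> FI" shows "(\<lambda>x y. \<alpha> x y - \<beta> x y) \<in> FI"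
proof (rule FI_I)
  show "\<alpha> x y - \<beta> x y = 0" if "\<not> x \<le> y" for x y using that assms by (simp add: FI_0)
  fix x y
  have "N (\<lambda>x y. \<alpha> x y - \<beta> x y) x y \<subseteq> N \<alpha> x y \<union> N \<beta> x y" by (auto simp: N_def)
  thus "finite (N (\<lambda>x y. \<alpha> x y - \<beta> x y) x y)"
    by (rule finite_subset) (simp add: finite_N assms)
qed

lemma uminus_FI: assumes "\<alpha> \<in> FI" shows "(\<lambda>x y. - \<alpha> x y) \<in> FI"
proof (rule FI_I)
  show "- \<alpha> x y = 0" if "\<not> x \<le> y" for x y using that assms by (simp add: FI_0)
  fix x y
  have "N (\<lambda>x y. - \<alpha> x y) x y = N \<alpha> x y" by (auto simp: N_def)
  thus "finite (N (\<lambda>x y. - \<alpha> x y) x y)" by (simp add: finite_N assms)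
qed

lemma conv_distrib_right:
  assumes "\<alpha> \<in> FI" "\<beta> \<in> FI" "\<gamma> \<in> FI"
  shows "conv (\<lambda>x y. \<alpha> x y + \<beta> x y) \<gamma> = (\<lambda>x y. conv \<alpha> \<gamma> x y + conv \<beta> \<gamma> x y)"
proof (intro ext)
  fix x y show "conv (\<lambda>x y. \<alpha> x y + \<beta> x y) \<gamma> x y = conv \<alpha> \<gamma> x y + conv \<beta> \<gamma> x y"
    by (cases "x \<le> y") (simp_all add: conv_0 conv_pts_right assms plus_FI sum.distrib distrib_right)
qed

lemma conv_distrib_left:
  assumes "\<alpha> \<in> FI" "\<beta> \<in> FI" "\<gamma> \<in> FI"
  shows "conv \<gamma> (\<lambda>x y. \<alpha> x y + \<beta> x y) = (\<lambda>x y. conv \<gamma> \<alpha> x y + conv \<gamma> \<beta> x y)"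
proof (intro ext)
  fix x y show "conv \<gamma> (\<lambda>x y. \<alpha> x y + \<beta> x y) x y = conv \<gamma> \<alpha> x y + conv \<gamma> \<beta> x y"
    by (cases "x \<le> y") (simp_all add: conv_0 conv_pts_left assms plus_FI sum.distrib distrib_left)
qed

lemma zero_ne_one_inc: "(zero_inc :: ('a::order,'k::field) inc) \<noteq> one_inc"
proof -
  have "zero_inc (x::'a) x \<noteq> (one_inc x x::'k)" for x by (simp add: zero_inc_def one_inc_def)
  thus ?thesis by metis
qed

typedef (overloaded) ('a, 'k) fi = "FI :: ('a::order, 'k::field) inc set" morphisms R A
  using zero_FI by blast

lemma R_FI: "R a \<in> FI" using R by blast

instantiation fi :: (order, field) ring_1
begin
definition "0 = A zero_inc"
definition "1 = A one_inc"
definition "a + b = A (\<lambda>x y. R a x y + R b x y)"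
definition "a - b = A (\<lambda>x y. R a x y - R b x y)"
definition "- a = A (\<lambda>x y. - R a x y)"
definition "a * b = A (conv (R a) (R b))"

lemma R_zero': "R (A zero_inc) = zero_inc" by (simp add: A_inverse zero_FI)
lemma zero_inc_eq: "zero_inc = (\<lambda>x y. 0)" by (intro ext) (simp add: zero_inc_def)
lemma R_zero0: "R (A (\<lambda>x y. 0)) = (\<lambda>x y. 0)" using zero_FI unfolding zero_inc_eq by (rule A_inverse)
lemma R_one': "R (A one_inc) = one_inc" by (simp add: A_inverse one_FI)
lemma R_plus': "R (A (\<lambda>x y. R a x y + R b x y)) = (\<lambda>x y. R a x y + R b x y)" by (simp add: A_inverse plus_FI R_FI)
lemma R_minus': "R (A (\<lambda>x y. R a x y - R b x y)) = (\<lambda>x y. R a x y - R b x y)" by (simp add: A_inverse minus_FI R_FI)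
lemma R_uminus': "R (A (\<lambda>x y. - R a x y)) = (\<lambda>x y. - R a x y)" by (simp add: A_inverse uminus_FI R_FI)
lemma R_times': "R (A (conv (R a) (R b))) = conv (R a) (R b)" by (simp add: A_inverse conv_FI R_FI)

instance
proof
  fix a b c :: "('a, 'b) fi"
  show "a * b * c = a * (b * c)" by (simp add: R_inject[symmetric] zero_fi_def one_fi_def plus_fi_def minus_fi_def uminus_fi_def times_fi_def R_zero' R_one' R_plus' R_minus' R_uminus' R_times' R_inverse R_zero0 conv_assoc R_FI)
  show "1 * a = a" by (simp add: R_inject[symmetric] zero_fi_def one_fi_def plus_fi_def minus_fi_def uminus_fi_def times_fi_def R_zero' R_one' R_plus' R_minus' R_uminus' R_times' R_inverse R_zero0 conv_one_left R_FI)
  show "a * 1 = a" by (simp add: R_inject[symmetric] zero_fi_def one_fi_def plus_fi_def minus_fi_def uminus_fi_def times_fi_def R_zero' R_one' R_plus' R_minus' R_uminus' R_times' R_inverse R_zero0 conv_one_right R_FI)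
  show "a + b + c = a + (b + c)" by (simp add: R_inject[symmetric] zero_fi_def one_fi_def plus_fi_def minus_fi_def uminus_fi_def times_fi_def R_zero' R_one' R_plus' R_minus' R_uminus' R_times' R_inverse R_zero0 add.assoc)
  show "a + b = b + a" by (simp add: R_inject[symmetric] zero_fi_def one_fi_def plus_fi_def minus_fi_def uminus_fi_def times_fi_def R_zero' R_one' R_plus' R_minus' R_uminus' R_times' R_inverse R_zero0 add.commute)
  show "0 + a = a" by (simp add: R_inject[symmetric] zero_fi_def one_fi_def plus_fi_def minus_fi_def uminus_fi_def times_fi_def R_zero' R_one' R_plus' R_minus' R_uminus' R_times' R_inverse R_zero0 zero_inc_eq)
  show "- a + a = 0" by (simp add: R_inject[symmetric] zero_fi_def one_fi_def plus_fi_def minus_fi_def uminus_fi_def times_fi_def R_zero' R_one' R_plus' R_minus' R_uminus' R_times' R_inverse R_zero0 zero_inc_eq)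
  show "a - b = a + - b" by (simp add: R_inject[symmetric] zero_fi_def one_fi_def plus_fi_def minus_fi_def uminus_fi_def times_fi_def R_zero' R_one' R_plus' R_minus' R_uminus' R_times')
  show "(a + b) * c = a * c + b * c"
    by (simp add: R_inject[symmetric] zero_fi_def one_fi_def plus_fi_def minus_fi_def uminus_fi_def times_fi_def R_zero' R_one' R_plus' R_minus' R_uminus' R_times' R_inverse R_zero0 conv_distrib_right R_FI)
  show "a * (b + c) = a * b + a * c"
    by (simp add: R_inject[symmetric] zero_fi_def one_fi_def plus_fi_def minus_fi_def uminus_fi_def times_fi_def R_zero' R_one' R_plus' R_minus' R_uminus' R_times' R_inverse R_zero0 conv_distrib_left R_FI)
  show "0 \<noteq> (1::('a,'b) fi)"
    using zero_ne_one_inc by (metis zero_fi_def one_fi_def R_zero' R_one')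
qed
end

lemma R_zero: "R 0 = zero_inc" by (simp add: zero_fi_def A_inverse zero_FI)
lemma R_one: "R 1 = one_inc" by (simp add: one_fi_def A_inverse one_FI)
lemma R_plus: "R (a + b) = (\<lambda>x y. R a x y + R b x y)" by (simp add: plus_fi_def A_inverse plus_FI R_FI)
lemma R_minus: "R (a - b) = (\<lambda>x y. R a x y - R b x y)" by (simp add: minus_fi_def A_inverse minus_FI R_FI)
lemma R_uminus: "R (- a) = (\<lambda>x y. - R a x y)" by (simp add: uminus_fi_def A_inverse uminus_FI R_FI)
lemma R_times: "R (a * b) = conv (R a) (R b)" by (simp add: times_fi_def A_inverse conv_FI R_FI)




lemma R_sum: "R (\<Sum>i<(m::nat). f i) x y = (\<Sum>i<m. R (f i) x y)"
  by (induct m) (simp_all add: R_zero zero_inc_def R_plus)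

lemma geo_l: "(1 - x) * (\<Sum>i<n. x^i) = 1 - x^n" for x :: "'a::ring_1"
proof (induct n)
  case (Suc n)
  have "(1 - x) * (\<Sum>i<Suc n. x^i) = (1-x)*(\<Sum>i<n. x^i) + (1-x)*x^n" by (simp add: distrib_left)
  also have "\<dots> = (1 - x^n) + (1-x)*x^n" by (simp only: Suc)
  also have "\<dots> = (1 - x^n) + (x^n - x*x^n)" by (simp add: left_diff_distrib)
  also have "\<dots> = 1 - x^Suc n" by simp
  finally show ?case .
qed simp

lemma geo_r: "(\<Sum>i<n. x^i) * (1 - x) = 1 - x^n" for x :: "'a::ring_1"
proof (induct n)
  case (Suc n)
  have "(\<Sum>i<Suc n. x^i) * (1 - x) = (\<Sum>i<n. x^i)*(1-x) + x^n*(1-x)" by (simp add: distrib_right)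
  also have "\<dots> = (1 - x^n) + x^n*(1-x)" by (simp only: Suc)
  also have "\<dots> = (1 - x^n) + (x^n - x^n*x)" by (simp add: right_diff_distrib)
  also have "\<dots> = 1 - x^Suc n" by (simp add: power_commutes)
  finally show ?case .
qed simp

lemma sum_trunc: "K \<le> m \<Longrightarrow> (\<And>i. K \<le> i \<Longrightarrow> f i = 0) \<Longrightarrow> (\<Sum>i<m. f i) = (\<Sum>i<K. f i)"
  for f :: "nat \<Rightarrow> 'b::comm_monoid_add"
proof (induct m)
  case (Suc m)
  show ?case
  proof (cases "K = Suc m")
    case False
    hence "K \<le> m" using Suc by simp
    thus ?thesis using Suc by simp
  qed simp
qed simp

lemma conv_local_right:
  assumes "\<And>z. x \<le> z \<Longrightarrow> z \<le> y \<Longrightarrow> \<beta> z y = \<beta>' z y"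
  shows "conv \<alpha> \<beta> x y = conv \<alpha> \<beta>' x y"
proof -
  have eq: "{z. x \<le> z \<and> z \<le> y \<and> \<alpha> x z * \<beta> z y \<noteq> 0} = {z. x \<le> z \<and> z \<le> y \<and> \<alpha> x z * \<beta>' z y \<noteq> 0}"
    using assms by auto
  show ?thesis unfolding conv_def eq using assms by (auto intro!: sum.cong)
qed

lemma conv_local_left:
  assumes "\<And>z. x \<le> z \<Longrightarrow> z \<le> y \<Longrightarrow> \<alpha> x z = \<alpha>' x z"
  shows "conv \<alpha> \<beta> x y = conv \<alpha>' \<beta> x y"
proof -
  have eq: "{z. x \<le> z \<and> z \<le> y \<and> \<alpha> x z * \<beta> z y \<noteq> 0} = {z. x \<le> z \<and> z \<le> y \<and> \<alpha>' x z * \<beta> z y \<noteq> 0}"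
    using assms by auto
  show ?thesis unfolding conv_def eq using assms by (auto intro!: sum.cong)
qed

lemma conv_nonzero:
  assumes "conv \<alpha> \<beta> x y \<noteq> 0"
  obtains z where "x \<le> z" "z \<le> y" "\<alpha> x z * \<beta> z y \<noteq> 0"
  using assms by (auto simp: conv_def split: if_splits elim: sum.not_neutral_contains_not_neutral)

lemma N_mono: "x \<le> u \<Longrightarrow> v \<le> y \<Longrightarrow> N \<alpha> u v \<subseteq> N \<alpha> x y"
  by (auto simp: N_def intro: order_trans)

lemma pow_bound:
  fixes \<nu> :: "('a::order,'k::field) fi"
  assumes d: "\<And>x. R \<nu> x x = 0"
  shows "R (\<nu>^n) x y \<noteq> 0 \<Longrightarrow> n \<le> card (N (R \<nu>) x y)"
proof (induct n arbitrary: x)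
  case (Suc n)
  hence "conv (R \<nu>) (R (\<nu>^n)) x y \<noteq> 0" by (simp add: R_times)
  then obtain z where z: "x \<le> z" "z \<le> y" "R \<nu> x z * R (\<nu>^n) z y \<noteq> 0" by (rule conv_nonzero)
  have "x \<noteq> z" using z d by auto
  hence xz: "x < z" using z by (simp add: less_le)
  have IH: "n \<le> card (N (R \<nu>) z y)" using Suc z by simp
  have "N (R \<nu>) z y \<subset> N (R \<nu>) x y"
  proof
    show "N (R \<nu>) z y \<subseteq> N (R \<nu>) x y" using z by (intro N_mono) simp_all
    have "(x,z) \<in> N (R \<nu>) x y" using z xz by (auto simp: N_def)
    moreover have "(x,z) \<notin> N (R \<nu>) z y" using xz by (auto simp: N_def)
    ultimately show "N (R \<nu>) z y \<noteq> N (R \<nu>) x y" by blast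
  qed
  hence "card (N (R \<nu>) z y) < card (N (R \<nu>) x y)"
    by (rule psubset_card_mono[OF finite_N[OF R_FI]])
  thus ?case using IH by simp
qed simp

lemma unit_diag_inv:
  fixes b :: "('a::order,'k::field) fi"
  assumes d: "\<And>x. R b x x = 1"
  shows "\<exists>c. b * c = 1 \<and> c * b = 1"
proof -
  define \<nu> where "\<nu> = 1 - b"
  have bnu: "b = 1 - \<nu>" by (simp add: \<nu>_def)
  have dn: "R \<nu> x x = 0" for x by (simp add: \<nu>_def R_minus R_one one_inc_def d)
  define M where "M x y = Suc (card (N (R \<nu>) x y))" for x y
  define s where "s m = (\<Sum>i<m. \<nu>^i)" for m
  have van: "R (\<nu>^i) x y = 0" if "M x y \<le> i" for i x y
    using pow_bound[OF dn, of i x y] that by (auto simp: M_def)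
  have trunc: "R (s m) x y = R (s (M x y)) x y" if "M x y \<le> m" for m x y
    unfolding s_def R_sum by (rule sum_trunc[OF that van])
  have Mmono: "M u v \<le> M x y" if "x \<le> u" "v \<le> y" for x y u v
    unfolding M_def using card_mono[OF finite_N[OF R_FI] N_mono[OF that]] by simp
  define \<gamma> where "\<gamma> x y = R (s (M x y)) x y" for x y
  have loc: "\<gamma> u v = R (s (M x y)) u v" if "x \<le> u" "v \<le> y" for x y u v
    unfolding \<gamma>_def using trunc[OF Mmono[OF that]] by simp
  have gFI: "\<gamma> \<in> FI"
  proof (rule FI_I)
    show "\<gamma> x y = 0" if "\<not> x \<le> y" for x y
      unfolding \<gamma>_def by (rule FI_0[OF R_FI that])
    fix x y
    have "N \<gamma> x y = N (R (s (M x y))) x y"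
      unfolding N_def using loc by (auto intro: less_imp_le)
    thus "finite (N \<gamma> x y)" by (simp add: finite_N R_FI)
  qed
  have Rc: "R (A \<gamma>) = \<gamma>" using gFI by (simp add: A_inverse)
  have bs: "b * s m = 1 - \<nu>^m" "s m * b = 1 - \<nu>^m" for m
    unfolding bnu s_def by (simp_all add: geo_l geo_r)
  have "b * A \<gamma> = 1"
  proof -
    have "conv (R b) \<gamma> x y = one_inc x y" for x y
    proof (cases "x \<le> y")
      case True
      have "conv (R b) \<gamma> x y = conv (R b) (R (s (M x y))) x y"
        by (rule conv_local_right) (simp add: loc)
      also have "\<dots> = R (1 - \<nu>^(M x y)) x y" by (simp add: R_times[symmetric] bs)
      also have "\<dots> = one_inc x y" by (simp add: R_minus R_one van)
      finally show ?thesis .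
    next
      case False thus ?thesis by (auto simp: conv_0 one_inc_def)
    qed
    hence "R (b * A \<gamma>) = R 1" by (simp add: R_times Rc R_one fun_eq_iff)
    thus ?thesis by (simp add: R_inject)
  qed
  moreover have "A \<gamma> * b = 1"
  proof -
    have "conv \<gamma> (R b) x y = one_inc x y" for x y
    proof (cases "x \<le> y")
      case True
      have "conv \<gamma> (R b) x y = conv (R (s (M x y))) (R b) x y"
        by (rule conv_local_left) (simp add: loc)
      also have "\<dots> = R (1 - \<nu>^(M x y)) x y" by (simp add: R_times[symmetric] bs)
      also have "\<dots> = one_inc x y" by (simp add: R_minus R_one van)
      finally show ?thesis .
    next
      case False thus ?thesis by (auto simp: conv_0 one_inc_def)
    qed
    hence "R (A \<gamma> * b) = R 1" by (simp add: R_times Rc R_one fun_eq_iff)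
    thus ?thesis by (simp add: R_inject)
  qed
  ultimately show ?thesis by blast
qed



definition prim :: "'a::ring_1 \<Rightarrow> bool" where
  "prim e \<longleftrightarrow> e * e = e \<and> e \<noteq> 0 \<and> (\<forall>f. f * f = f \<and> f * e = f \<and> e * f = f \<longrightarrow> f = 0 \<or> f = e)"

lemma prim_conj:
  fixes b c e :: "'a::ring_1"
  assumes bc: "b * c = 1" and cb: "c * b = 1" and p: "prim e"
  shows "prim (c * e * b)"
  unfolding prim_def
proof (intro conjI allI impI)
  have ee: "e * e = e" "e \<noteq> 0" using p by (auto simp: prim_def)
  show "c * e * b * (c * e * b) = c * e * b"
    by (metis bc ee(1) mult.assoc mult_1_left)
  show "c * e * b \<noteq> 0"
  proof
    assume "c * e * b = 0"
    hence "b * (c * e * b) * c = 0" by simp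
    hence "e = 0" by (metis bc mult.assoc mult_1_left mult_1_right)
    thus False using ee by simp
  qed
  fix f assume f: "f * f = f \<and> f * (c * e * b) = f \<and> c * e * b * f = f"
  define g where "g = b * f * c"
  have "g * g = g" using f unfolding g_def by (metis bc mult.assoc mult_1_left)
  moreover have "g * e = g"
  proof -
    have "g * e = b * (f * (c * e * b)) * c" unfolding g_def by (metis bc cb mult.assoc mult_1_left mult_1_right)
    thus ?thesis using f g_def by simp
  qed
  moreover have "e * g = g"
  proof -
    have "e * g = b * ((c * e * b) * f) * c" unfolding g_def by (metis bc cb mult.assoc mult_1_left mult_1_right)
    thus ?thesis using f g_def by simp
  qed
  ultimately have "g = 0 \<or> g = e" using p by (auto simp: prim_def)
  moreover have "f = c * g * b" unfolding g_def by (metis cb mult.assoc mult_1_left mult_1_right)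
  ultimately show "f = 0 \<or> f = c * e * b" by auto
qed

lemma idem_R: "idempotent (R a) \<longleftrightarrow> a * a = a"
  by (simp add: idempotent_def R_FI R_times[symmetric] R_inject)

lemma primitive_R: "primitive (R a) \<longleftrightarrow> prim a"
proof
  assume h: "primitive (R a)"
  show "prim a" unfolding prim_def
  proof (intro conjI allI impI)
    show "a * a = a" using h by (simp add: primitive_def idem_R)
    show "a \<noteq> 0" using h by (auto simp: primitive_def R_zero[symmetric])
    fix f assume f: "f * f = f \<and> f * a = f \<and> a * f = f"
    hence "idempotent (R f) \<and> conv (R f) (R a) = R f \<and> conv (R a) (R f) = R f"
      by (simp add: idem_R R_times[symmetric])
    hence "R f = zero_inc \<or> R f = R a" using h unfolding primitive_def by blast
    thus "f = 0 \<or> f = a" by (metis R_zero R_inject)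
  qed
next
  assume h: "prim a"
  show "primitive (R a)" unfolding primitive_def
  proof (intro conjI allI impI)
    show "idempotent (R a)" using h by (simp add: prim_def idem_R)
    show "R a \<noteq> zero_inc" using h by (auto simp: prim_def R_zero[symmetric] R_inject)
    fix \<epsilon> assume e: "idempotent \<epsilon> \<and> conv \<epsilon> (R a) = \<epsilon> \<and> conv (R a) \<epsilon> = \<epsilon>"
    hence eF: "\<epsilon> \<in> FI" by (simp add: idempotent_def)
    hence eR: "R (A \<epsilon>) = \<epsilon>" by (simp add: A_inverse)
    have "A \<epsilon> * A \<epsilon> = A \<epsilon> \<and> A \<epsilon> * a = A \<epsilon> \<and> a * A \<epsilon> = A \<epsilon>"
      using e by (simp add: R_inject[symmetric] R_times eR idempotent_def)
    hence "A \<epsilon> = 0 \<or> A \<epsilon> = a" using h by (simp add: prim_def)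
    thus "\<epsilon> = zero_inc \<or> \<epsilon> = R a" using eR by (auto simp: R_zero)
  qed
qed

lemma conv_diag_left:
  assumes "\<alpha> \<in> FI" "\<beta> \<in> FI" "diagonal \<alpha>"
  shows "conv \<alpha> \<beta> x y = \<alpha> x x * \<beta> x y"
proof (cases "x \<le> y")
  case True
  have "conv \<alpha> \<beta> x y = (\<Sum>z\<in>{x}. \<alpha> x z * \<beta> z y)"
    by (rule conv_sum[OF assms(1,2) _ True]) (simp, metis assms(3) diagonal_def mult_zero_left singletonI)
  thus ?thesis by simp
qed (simp add: conv_0 FI_0[OF assms(2)])

lemma conv_diag_right:
  assumes "\<alpha> \<in> FI" "\<beta> \<in> FI" "diagonal \<beta>"
  shows "conv \<alpha> \<beta> x y = \<alpha> x y * \<beta> y y"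
proof (cases "x \<le> y")
  case True
  have "conv \<alpha> \<beta> x y = (\<Sum>z\<in>{y}. \<alpha> x z * \<beta> z y)"
    by (rule conv_sum[OF assms(1,2) _ True]) (simp, metis assms(3) diagonal_def mult_zero_right singletonI)
  thus ?thesis by simp
qed (simp add: conv_0 FI_0[OF assms(1)])

lemma conv_same:
  assumes "\<alpha> \<in> FI" "\<beta> \<in> FI"
  shows "conv \<alpha> \<beta> x x = \<alpha> x x * \<beta> x x"
proof -
  have "conv \<alpha> \<beta> x x = (\<Sum>z\<in>{x}. \<alpha> x z * \<beta> z x)"
    by (rule conv_sum[OF assms(1,2)]) (auto intro: order.antisym)
  thus ?thesis by simp
qed

lemma delta_FI: "(delta x :: ('a::order,'k::field) inc) \<in> FI"
proof (rule FI_I)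
  show "delta x u v = 0" if "\<not> u \<le> v" for u v using that by (auto simp: delta_def)
  fix u v
  show "finite (N (delta x) u v)"
    by (rule finite_subset[of _ "{}"]) (auto simp: N_def delta_def)
qed

lemma delta_diag: "diagonal (delta x)" by (simp add: diagonal_def delta_def)

lemma delta_primitive: "primitive (delta x :: ('a::order,'k::field) inc)"
  unfolding primitive_def
proof (intro conjI allI impI)
  have "conv (delta x) (delta x) = (delta x :: ('a,'k) inc)"
    by (intro ext) (simp add: conv_diag_left delta_FI delta_diag, simp add: delta_def)
  thus "idempotent (delta x :: ('a,'k) inc)" by (simp add: idempotent_def delta_FI)
  show "delta x \<noteq> (zero_inc :: ('a,'k) inc)"
  proof
    assume "delta x = (zero_inc :: ('a,'k) inc)"
    hence "delta x x x = (zero_inc x x :: 'k)" by simp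
    thus False by (simp add: delta_def zero_inc_def)
  qed
  fix \<epsilon> :: "('a,'k) inc"
  assume e: "idempotent \<epsilon> \<and> conv \<epsilon> (delta x) = \<epsilon> \<and> conv (delta x) \<epsilon> = \<epsilon>"
  hence eF: "\<epsilon> \<in> FI" by (simp add: idempotent_def)
  have E: "\<epsilon> u v = (if u = x \<and> v = x then \<epsilon> x x else 0)" for u v
  proof -
    have "conv (delta x) \<epsilon> u v = delta x u u * \<epsilon> u v"
      by (rule conv_diag_left[OF delta_FI eF delta_diag])
    hence 1: "\<epsilon> u v = delta x u u * \<epsilon> u v" using e by simp
    have "conv \<epsilon> (delta x) u v = \<epsilon> u v * delta x v v"
      by (rule conv_diag_right[OF eF delta_FI delta_diag])
    hence 2: "\<epsilon> u v = \<epsilon> u v * delta x v v" using e by simp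
    show ?thesis using 1 2 by (auto simp: delta_def)
  qed
  have "\<epsilon> x x * \<epsilon> x x = \<epsilon> x x"
    using e conv_same[OF eF eF, of x] by (simp add: idempotent_def)
  hence "\<epsilon> x x = 0 \<or> \<epsilon> x x = 1"
    by (metis mult_cancel_right2 mult_zero_left)
  thus "\<epsilon> = zero_inc \<or> \<epsilon> = delta x"
  proof
    assume "\<epsilon> x x = 0" thus ?thesis by (auto simp: fun_eq_iff zero_inc_def intro!: disjI1 E[THEN trans])
  next
    assume "\<epsilon> x x = 1" thus ?thesis by (auto simp: fun_eq_iff delta_def intro!: disjI2 E[THEN trans])
  qed
qed



lemma diag_primitive:
  assumes d: "diagonal \<alpha>" and p: "primitive \<alpha>"
  shows "\<exists>x. \<alpha> = delta x"
proof -
  have aF: "\<alpha> \<in> FI" and idem: "conv \<alpha> \<alpha> = \<alpha>" and nz: "\<alpha> \<noteq> zero_inc"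
    using p by (auto simp: primitive_def idempotent_def)
  obtain u v where uv: "\<alpha> u v \<noteq> 0" using nz by (auto simp: fun_eq_iff zero_inc_def)
  hence "u = v" using d by (auto simp: diagonal_def)
  with uv have ax: "\<alpha> u u \<noteq> 0" by simp
  have "\<alpha> u u * \<alpha> u u = \<alpha> u u" using conv_same[OF aF aF, of u] idem by simp
  hence a1: "\<alpha> u u = 1" using ax by (metis mult_cancel_right2)
  have off: "\<alpha> s t = 0" if "s \<noteq> t" for s t using d that by (simp add: diagonal_def)
  have c1: "conv (delta u) \<alpha> = delta u"
  proof (intro ext)
    fix s t
    have "conv (delta u) \<alpha> s t = delta u s s * \<alpha> s t" by (rule conv_diag_left[OF delta_FI aF delta_diag])
    thus "conv (delta u) \<alpha> s t = delta u s t" using a1 off by (auto simp: delta_def)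
  qed
  have c2: "conv \<alpha> (delta u) = delta u"
  proof (intro ext)
    fix s t
    have "conv \<alpha> (delta u) s t = \<alpha> s t * delta u t t" by (rule conv_diag_right[OF aF delta_FI delta_diag])
    thus "conv \<alpha> (delta u) s t = delta u s t" using a1 off by (auto simp: delta_def)
  qed
  have "idempotent (delta u)" "delta u \<noteq> zero_inc" using delta_primitive[of u] by (auto simp: primitive_def)
  hence "delta u = \<alpha>" using p c1 c2 unfolding primitive_def by blast
  thus ?thesis by metis
qed

definition dg :: "('a::order, 'k::field) inc \<Rightarrow> ('a, 'k) inc" where
  "dg \<alpha> x y = (if x = y then \<alpha> x x else 0)"

lemma dg_FI: "(dg \<alpha> :: ('a::order,'k::field) inc) \<in> FI"
proof (rule FI_I)
  show "dg \<alpha> u v = 0" if "\<not> u \<le> v" for u v using that by (auto simp: dg_def)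
  fix u v
  show "finite (N (dg \<alpha>) u v)"
    by (rule finite_subset[of _ "{}"]) (auto simp: N_def dg_def)
qed

lemma dg_diag: "diagonal (dg \<alpha>)" by (simp add: diagonal_def dg_def)

lemma inv_FI_eq:
  assumes "\<beta> \<in> FI" "\<gamma> \<in> FI" "conv \<beta> \<gamma> = one_inc" "conv \<gamma> \<beta> = one_inc"
  shows "inv_FI \<beta> = \<gamma>"
  unfolding inv_FI_def
proof (rule the_equality)
  show "\<gamma> \<in> FI \<and> conv \<beta> \<gamma> = one_inc \<and> conv \<gamma> \<beta> = one_inc" using assms by simp
  fix g assume g: "g \<in> FI \<and> conv \<beta> g = one_inc \<and> conv g \<beta> = one_inc"
  have "conv (conv g \<beta>) \<gamma> = conv g (conv \<beta> \<gamma>)" using g assms by (intro conv_assoc) auto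
  thus "g = \<gamma>" using g assms by (simp add: conv_one_left conv_one_right)
qed



theorem lemma1:
  fixes \<alpha> :: "('a::order, 'k::field) inc"
  assumes "idempotent \<alpha>"
  shows "(primitive \<alpha> \<longleftrightarrow>
           (\<exists>x \<beta>. invertible_FI \<beta> \<and> \<alpha> = conv (conv (inv_FI \<beta>) (delta x)) \<beta>))
         \<and> (diagonal \<alpha> \<longrightarrow> (primitive \<alpha> \<longleftrightarrow> (\<exists>x. \<alpha> = delta x)))"
proof (intro conjI impI)
  have aF: "\<alpha> \<in> FI" and aa: "conv \<alpha> \<alpha> = \<alpha>" using assms by (auto simp: idempotent_def)
  define a where "a = A \<alpha>"
  have Ra: "R a = \<alpha>" using aF by (simp add: a_def A_inverse)
  have aa': "a * a = a" using aa by (simp add: R_inject[symmetric] R_times Ra)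
  have diagid: "\<alpha> u u * \<alpha> u u = \<alpha> u u" for u using conv_same[OF aF aF, of u] aa by simp
  show "primitive \<alpha> \<longleftrightarrow> (\<exists>x \<beta>. invertible_FI \<beta> \<and> \<alpha> = conv (conv (inv_FI \<beta>) (delta x)) \<beta>)"
  proof
    assume pa: "primitive \<alpha>"
    hence pa': "prim a" using primitive_R Ra by metis
    define e where "e = A (dg \<alpha>)"
    have Re: "R e = dg \<alpha>" by (simp add: e_def A_inverse dg_FI)
    have ee: "e * e = e"
    proof -
      have "conv (dg \<alpha>) (dg \<alpha>) = dg \<alpha>"
      proof (intro ext)
        fix s t
        have "conv (dg \<alpha>) (dg \<alpha>) s t = dg \<alpha> s s * dg \<alpha> s t" by (rule conv_diag_left[OF dg_FI dg_FI dg_diag])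
        thus "conv (dg \<alpha>) (dg \<alpha>) s t = dg \<alpha> s t" using diagid by (simp add: dg_def)
      qed
      thus ?thesis by (simp add: R_inject[symmetric] R_times Re)
    qed
    define b where "b = e * a + (1 - e) * (1 - a)"
    have bd: "R b x x = 1" for x
    proof -
      have t: "\<alpha> x x = 0 \<or> \<alpha> x x = 1" using diagid[of x] by (metis mult_cancel_right2 mult_zero_left)
      have "R b x x = \<alpha> x x * \<alpha> x x + (1 - \<alpha> x x) * (1 - \<alpha> x x)"
        by (simp only: b_def R_plus R_times conv_same[OF R_FI R_FI])
           (simp add: R_minus R_one one_inc_def Re Ra dg_def)
      thus ?thesis using t by auto
    qed
    obtain c where bc: "b * c = 1" and cb: "c * b = 1" using unit_diag_inv[OF bd] by blast
    have z1: "(1 - a) * a = 0" using aa' by (simp add: left_diff_distrib)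
    have z2: "e * (1 - e) = 0" using ee by (simp add: right_diff_distrib)
    have ba: "b * a = e * b"
    proof -
      have "b * a = e * (a * a) + (1 - e) * ((1 - a) * a)" by (simp add: b_def distrib_right mult.assoc)
      also have "\<dots> = e * a" using aa' z1 by simp
      also have "\<dots> = (e * e) * a + (e * (1 - e)) * (1 - a)" using ee z2 by simp
      also have "\<dots> = e * b" by (simp add: b_def distrib_left mult.assoc)
      finally show ?thesis .
    qed
    have "a = (c * b) * a" using cb by simp
    also have "\<dots> = c * (b * a)" by (simp only: mult.assoc)
    also have "\<dots> = c * e * b" by (simp only: ba mult.assoc)
    finally have a_eq: "a = c * e * b" .
    have "b * a * c = e * b * c" by (simp only: ba)
    also have "\<dots> = e * (b * c)" by (simp only: mult.assoc)
    also have "\<dots> = e" by (simp add: bc)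
    finally have e_eq: "e = b * a * c" by simp
    have "prim e" unfolding e_eq by (rule prim_conj[OF cb bc pa'])
    hence "primitive (dg \<alpha>)" using primitive_R Re by metis
    then obtain x where dx: "dg \<alpha> = delta x" using diag_primitive dg_diag by blast
    have inv: "invertible_FI (R b)" using bc cb
      by (auto simp: invertible_FI_def R_FI R_times[symmetric] R_one intro!: bexI[of _ "R c"])
    have ib: "inv_FI (R b) = R c"
      by (rule inv_FI_eq) (simp_all add: R_FI R_times[symmetric] bc cb R_one)
    have "\<alpha> = R (c * e * b)" using Ra a_eq by simp
    also have "\<dots> = conv (conv (R c) (R e)) (R b)" by (simp add: R_times)
    also have "\<dots> = conv (conv (inv_FI (R b)) (delta x)) (R b)" by (simp only: ib Re dx)
    finally have "\<alpha> = conv (conv (inv_FI (R b)) (delta x)) (R b)" .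
    thus "\<exists>x \<beta>. invertible_FI \<beta> \<and> \<alpha> = conv (conv (inv_FI \<beta>) (delta x)) \<beta>" using inv by blast
  next
    assume "\<exists>x \<beta>. invertible_FI \<beta> \<and> \<alpha> = conv (conv (inv_FI \<beta>) (delta x)) \<beta>"
    then obtain x \<beta> where inv: "invertible_FI \<beta>" and ae: "\<alpha> = conv (conv (inv_FI \<beta>) (delta x)) \<beta>" by blast
    then obtain \<gamma> where bF: "\<beta> \<in> FI" and gF: "\<gamma> \<in> FI" and bg: "conv \<beta> \<gamma> = one_inc" and gb: "conv \<gamma> \<beta> = one_inc"
      by (auto simp: invertible_FI_def)
    have ig: "inv_FI \<beta> = \<gamma>" by (rule inv_FI_eq[OF bF gF bg gb])
    define b where "b = A \<beta>"
    define c where "c = A \<gamma>"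
    define d where "d = (A (delta x) :: ('a,'k) fi)"
    have Rb: "R b = \<beta>" using bF by (simp add: b_def A_inverse)
    have Rc: "R c = \<gamma>" using gF by (simp add: c_def A_inverse)
    have Rd: "R d = delta x" by (simp add: d_def A_inverse delta_FI)
    have bc: "b * c = 1" using bg by (simp add: R_inject[symmetric] R_times Rb Rc R_one)
    have cb: "c * b = 1" using gb by (simp add: R_inject[symmetric] R_times Rb Rc R_one)
    have "prim d" using delta_primitive[of x] primitive_R Rd by metis
    hence "prim (c * d * b)" by (rule prim_conj[OF bc cb])
    moreover have "\<alpha> = R (c * d * b)" by (simp add: ae ig R_times Rb Rc Rd)
    ultimately show "primitive \<alpha>" using primitive_R by metis
  qed
next
  assume d: "diagonal \<alpha>"
  show "primitive \<alpha> \<longleftrightarrow> (\<exists>x. \<alpha> = delta x)"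
    using diag_primitive[OF d] delta_primitive by blast
qed

end
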